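(* Let $G \neq \{1\}$ be a finitely generated, residually finite group, and let $\operatorname{rk}(G)$ denote the minimal number of elements generating $G$. Let $F = F(\mathcal{X})$ be a free group with basis $\mathcal{X}$ of cardinality $\operatorname{rk}(G)$, let $R \trianglelefteq F$ be a normal subgroup, and let $\pi_\star \colon F(\mathcal{X})/R \to G$ be an isomorphism. Suppose $R \neq \{1\}$, and let $r \in R \setminus \{1\}$ be an element of minimal length, where the length of an element of $F$ is the number of letters of the freely reduced word in $\mathcal{X} \cup \mathcal{X}^{-1}$ representing it. Then there exists a subgroup $F_1$ of finite index in $F$ with $R \subseteq F_1$ such that $r$ is a member of some basis of the (free) group $F_1$.
   Context: The rank of a finitely generated group is the minimal cardinality of a generating set. A basis of a free group is a free generating set. *)

theory Defs
  imports "HOL-Algebra.Algebra"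
begin

text \<open>Words over an alphabet: a letter (x, True) stands for x, (x, False) for its inverse.\<close>

fun word_eval :: "('a, 'b) monoid_scheme \<Rightarrow> ('a \<times> bool) list \<Rightarrow> 'a" where
  "word_eval G [] = \<one>\<^bsub>G\<^esub>"
| "word_eval G ((x, b) # w) = (if b then x else inv\<^bsub>G\<^esub> x) \<otimes>\<^bsub>G\<^esub> word_eval G w"

fun reduced :: "('a \<times> bool) list \<Rightarrow> bool" where
  "reduced [] = True"
| "reduced [_] = True"
| "reduced ((x, b) # (y, c) # w) = (\<not> (x = y \<and> b \<noteq> c) \<and> reduced ((y, c) # w))"

definition word_over :: "'a set \<Rightarrow> ('a \<times> bool) list \<Rightarrow> bool" where
  "word_over A ws \<longleftrightarrow> (\<forall>p \<in> set ws. fst p \<in> A)"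

definition free_basis :: "('a, 'b) monoid_scheme \<Rightarrow> 'a set \<Rightarrow> bool" where
  "free_basis G B \<longleftrightarrow> B \<subseteq> carrier G \<and> generate G B = carrier G \<and>
     (\<forall>w. word_over B w \<and> reduced w \<and> w \<noteq> [] \<longrightarrow> word_eval G w \<noteq> \<one>\<^bsub>G\<^esub>)"

definition word_length :: "('a, 'b) monoid_scheme \<Rightarrow> 'a set \<Rightarrow> 'a \<Rightarrow> nat" where
  "word_length G A g = length (THE w. word_over A w \<and> reduced w \<and> word_eval G w = g)"

definition finitely_generated :: "('a, 'b) monoid_scheme \<Rightarrow> bool" where
  "finitely_generated G \<longleftrightarrow> (\<exists>S. finite S \<and> S \<subseteq> carrier G \<and> generate G S = carrier G)"

definition group_rank :: "('a, 'b) monoid_scheme \<Rightarrow> nat" where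
  "group_rank G = (LEAST n. \<exists>S. finite S \<and> card S = n \<and> S \<subseteq> carrier G \<and> generate G S = carrier G)"

definition residually_finite :: "('a, 'b) monoid_scheme \<Rightarrow> bool" where
  "residually_finite G \<longleftrightarrow> (\<forall>g \<in> carrier G. g \<noteq> \<one>\<^bsub>G\<^esub> \<longrightarrow>
     (\<exists>N. N \<lhd> G \<and> finite (carrier (G Mod N)) \<and> g \<notin> N))"

end

theory Submission
  imports Defs
begin

definition linv :: "'a \<times> bool \<Rightarrow> 'a \<times> bool" where "linv l = (fst l, \<not> snd l)"
definition winv :: "('a \<times> bool) list \<Rightarrow> ('a \<times> bool) list" where "winv w = rev (map linv w)"
definition lval :: "('a, 'b) monoid_scheme \<Rightarrow> 'a \<times> bool \<Rightarrow> 'a" where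
  "lval G l = (if snd l then fst l else inv\<^bsub>G\<^esub> (fst l))"

lemma word_eval_Cons: "word_eval G (l # w) = lval G l \<otimes>\<^bsub>G\<^esub> word_eval G w"
  by (cases l) (simp add: lval_def)

lemma linv_linv[simp]: "linv (linv l) = l" by (simp add: linv_def)
lemma winv_winv[simp]: "winv (winv w) = w" by (simp add: winv_def rev_map comp_def)
lemma winv_append[simp]: "winv (u @ v) = winv v @ winv u" by (simp add: winv_def)
lemma winv_Nil[simp]: "winv [] = []" by (simp add: winv_def)
lemma winv_Cons: "winv (l # w) = winv w @ [linv l]" by (simp add: winv_def)
lemma length_winv[simp]: "length (winv w) = length w" by (simp add: winv_def)
lemma winv_eq_Nil[simp]: "winv w = [] \<longleftrightarrow> w = []" by (simp add: winv_def)
lemma linv_neq[simp]: "linv l \<noteq> l" by (cases l) (simp add: linv_def)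
lemma linv_inj[simp]: "linv a = linv b \<longleftrightarrow> a = b" by (cases a; cases b) (auto simp: linv_def)

lemma reduced_Cons2: "reduced (a # b # w) \<longleftrightarrow> b \<noteq> linv a \<and> reduced (b # w)"
  by (cases a; cases b) (auto simp: linv_def)

lemma reduced_ConsD: "reduced (a # w) \<Longrightarrow> reduced w"
  by (cases w) (auto simp: reduced_Cons2)

lemma reduced_append:
  "reduced (u @ v) \<longleftrightarrow> reduced u \<and> reduced v \<and> (u \<noteq> [] \<and> v \<noteq> [] \<longrightarrow> hd v \<noteq> linv (last u))"
proof (induction u)
  case Nil then show ?case by simp
next
  case (Cons a u)
  show ?case
  proof (cases u)
    case Nil
    then show ?thesis by (cases v) (auto simp: reduced_Cons2)
  next
    case (Cons b u')
    then show ?thesis using Cons.IH by (auto simp: reduced_Cons2)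
  qed
qed

lemma reduced_snoc2: "reduced (w @ [a, b]) \<longleftrightarrow> reduced (w @ [a]) \<and> b \<noteq> linv a"
  using reduced_append[of "w @ [a]" "[b]"] by auto

lemma last_winv: "w \<noteq> [] \<Longrightarrow> last (winv w) = linv (hd w)"
  by (cases w) (auto simp: winv_def)
lemma hd_winv: "w \<noteq> [] \<Longrightarrow> hd (winv w) = linv (last w)"
  by (induction w) (auto simp: winv_def hd_append)

lemma reduced_winv: "reduced w \<Longrightarrow> reduced (winv w)"
proof (induction w)
  case (Cons a w)
  have "reduced w" using Cons.prems reduced_ConsD by blast
  moreover have "w \<noteq> [] \<Longrightarrow> hd w \<noteq> linv a" using Cons.prems by (cases w) (auto simp: reduced_Cons2)
  ultimately show ?case using Cons.IH
    by (auto simp: winv_Cons reduced_append last_winv)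
qed simp

lemma reduced_winv_iff[simp]: "reduced (winv w) \<longleftrightarrow> reduced w"
  using reduced_winv[of "winv w"] reduced_winv[of w] by auto

lemma reduced_take: "reduced w \<Longrightarrow> reduced (take k w)"
  using reduced_append[of "take k w" "drop k w"] by simp
lemma reduced_drop: "reduced w \<Longrightarrow> reduced (drop k w)"
  using reduced_append[of "take k w" "drop k w"] by simp

lemma word_over_append[simp]: "word_over A (u @ v) \<longleftrightarrow> word_over A u \<and> word_over A v"
  by (auto simp: word_over_def)
lemma word_over_Cons[simp]: "word_over A (l # v) \<longleftrightarrow> fst l \<in> A \<and> word_over A v"
  by (auto simp: word_over_def)
lemma word_over_Nil[simp]: "word_over A []" by (simp add: word_over_def)
lemma word_over_winv[simp]: "word_over A (winv w) \<longleftrightarrow> word_over A w"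
  by (auto simp: word_over_def winv_def linv_def)
lemma word_over_take: "word_over A w \<Longrightarrow> word_over A (take k w)"
  by (auto simp: word_over_def dest: in_set_takeD)
lemma word_over_drop: "word_over A w \<Longrightarrow> word_over A (drop k w)"
  by (auto simp: word_over_def dest: in_set_dropD)

context group
begin

lemma lval_closed: "fst l \<in> carrier G \<Longrightarrow> lval G l \<in> carrier G"
  by (simp add: lval_def)

lemma lval_linv: "fst l \<in> carrier G \<Longrightarrow> lval G (linv l) = inv (lval G l)"
  by (simp add: lval_def linv_def)

lemma word_eval_closed: "A \<subseteq> carrier G \<Longrightarrow> word_over A w \<Longrightarrow> word_eval G w \<in> carrier G"
  by (induction w) (auto simp: word_eval_Cons lval_closed)

lemma word_eval_append:
  "A \<subseteq> carrier G \<Longrightarrow> word_over A u \<Longrightarrow> word_over A v \<Longrightarrow>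
     word_eval G (u @ v) = word_eval G u \<otimes> word_eval G v"
proof (induction u)
  case (Cons l u)
  have "fst l \<in> carrier G" using Cons by auto
  then show ?case using Cons
    by (simp add: word_eval_Cons m_assoc lval_closed word_eval_closed[of A])
qed (simp_all add: word_eval_closed)

lemma word_eval_winv:
  "A \<subseteq> carrier G \<Longrightarrow> word_over A w \<Longrightarrow> word_eval G (winv w) = inv (word_eval G w)"
proof (induction w)
  case (Cons l w)
  have l: "fst l \<in> carrier G" using Cons by auto
  have "word_eval G (winv (l # w)) = word_eval G (winv w) \<otimes> word_eval G [linv l]"
    unfolding winv_Cons using Cons.prems by (subst word_eval_append[of A]) (auto simp: linv_def)
  also have "\<dots> = inv (word_eval G w) \<otimes> inv (lval G l)"
    using Cons l by (simp add: word_eval_Cons lval_linv lval_closed)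
  also have "\<dots> = inv (lval G l \<otimes> word_eval G w)"
    using Cons l by (simp add: inv_mult_group lval_closed word_eval_closed)
  finally show ?case by (simp add: word_eval_Cons)
qed (simp_all add: word_eval_closed)

end

fun rcons :: "'a \<times> bool \<Rightarrow> ('a \<times> bool) list \<Rightarrow> ('a \<times> bool) list" where
  "rcons l [] = [l]"
| "rcons l (m # w) = (if m = linv l then w else l # m # w)"

definition red :: "('a \<times> bool) list \<Rightarrow> ('a \<times> bool) list" where
  "red w = foldr rcons w []"

lemma red_Cons: "red (l # w) = rcons l (red w)" by (simp add: red_def)
lemma red_Nil: "red [] = []" by (simp add: red_def)

lemma reduced_rcons: "reduced w \<Longrightarrow> reduced (rcons l w)"
  by (cases w) (auto simp: reduced_Cons2 dest: reduced_ConsD)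

lemma word_over_rcons: "fst l \<in> A \<Longrightarrow> word_over A w \<Longrightarrow> word_over A (rcons l w)"
  by (cases w) auto

lemma reduced_red: "reduced (red w)"
  by (induction w) (auto simp: red_Cons red_Nil reduced_rcons)

lemma word_over_red: "word_over A w \<Longrightarrow> word_over A (red w)"
  by (induction w) (auto simp: red_Cons red_Nil word_over_rcons)

locale fb = group +
  fixes S
  assumes fbS: "free_basis G S"
begin

lemma S_carrier: "S \<subseteq> carrier G" using fbS by (simp add: free_basis_def)

lemma ev_closed: "word_over S w \<Longrightarrow> word_eval G w \<in> carrier G"
  using word_eval_closed[OF S_carrier] .

lemma ev_append: "word_over S u \<Longrightarrow> word_over S v \<Longrightarrow> word_eval G (u @ v) = word_eval G u \<otimes> word_eval G v"
  using word_eval_append[OF S_carrier] .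

lemma ev_winv: "word_over S w \<Longrightarrow> word_eval G (winv w) = inv (word_eval G w)"
  using word_eval_winv[OF S_carrier] .

lemma ev_rcons: "fst l \<in> S \<Longrightarrow> word_over S w \<Longrightarrow> word_eval G (rcons l w) = lval G l \<otimes> word_eval G w"
proof (cases w)
  case (Cons m w')
  assume l: "fst l \<in> S" and w: "word_over S w"
  show ?thesis
  proof (cases "m = linv l")
    case True
    have lc: "fst l \<in> carrier G" using l S_carrier by auto
    have "lval G l \<otimes> word_eval G w = lval G l \<otimes> (inv (lval G l) \<otimes> word_eval G w')"
      using True Cons lc by (simp add: word_eval_Cons lval_linv)
    also have "\<dots> = word_eval G w'"
      using lc w Cons by (simp add: lval_closed ev_closed m_assoc[symmetric])
    finally show ?thesis using Cons True by simp
  qed (simp add: Cons word_eval_Cons)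
qed (simp add: word_eval_Cons)

lemma ev_red: "word_over S w \<Longrightarrow> word_eval G (red w) = word_eval G w"
  by (induction w) (auto simp: red_Cons red_Nil ev_rcons word_over_red word_eval_Cons)

lemma nonempty_ne_one: "word_over S w \<Longrightarrow> reduced w \<Longrightarrow> w \<noteq> [] \<Longrightarrow> word_eval G w \<noteq> \<one>"
  using fbS by (simp add: free_basis_def)

lemma exists_word: "g \<in> carrier G \<Longrightarrow> \<exists>w. word_over S w \<and> word_eval G w = g"
proof -
  assume "g \<in> carrier G"
  then have "g \<in> generate G S" using fbS by (simp add: free_basis_def)
  then show ?thesis
  proof (induction)
    case one
    then show ?case by (intro exI[of _ "[]"]) simp
  next
    case (incl h)
    then show ?case using S_carrier by (intro exI[of _ "[(h, True)]"]) auto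
  next
    case (inv h)
    then show ?case using S_carrier by (intro exI[of _ "[(h, False)]"]) auto
  next
    case (eng g h)
    then obtain u v where "word_over S u" "word_eval G u = g" "word_over S v" "word_eval G v = h" by blast
    then show ?case by (intro exI[of _ "u @ v"]) (simp add: ev_append)
  qed
qed

lemma exists_reduced: "g \<in> carrier G \<Longrightarrow> \<exists>w. word_over S w \<and> reduced w \<and> word_eval G w = g"
  using exists_word by (metis ev_red reduced_red word_over_red)

lemma reduced_unique:
  "word_over S u \<Longrightarrow> word_over S v \<Longrightarrow> reduced u \<Longrightarrow> reduced v \<Longrightarrow>
   word_eval G u = word_eval G v \<Longrightarrow> u = v"
proof (induction u arbitrary: v)
  case Nil
  then show ?case using nonempty_ne_one[of v] by auto
next
  case (Cons a u)
  show ?case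
  proof (cases v)
    case Nil
    then show ?thesis using Cons.prems nonempty_ne_one[of "a # u"] by auto
  next
    case (Cons b v')
    have ac: "lval G a \<in> carrier G" "lval G b \<in> carrier G"
      using Cons Cons.prems S_carrier by (auto intro!: lval_closed)
    show ?thesis
    proof (cases "a = b")
      case True
      then have "word_eval G u = word_eval G v'"
        using Cons.prems Cons ac by (simp add: word_eval_Cons ev_closed)
      then show ?thesis using Cons.IH[of v'] Cons.prems Cons True by (auto dest: reduced_ConsD)
    next
      case False
      let ?x = "winv v @ a # u"
      have "reduced ?x" using Cons.prems Cons False
        by (subst reduced_append) (auto simp: last_winv)
      moreover have "word_over S ?x" using Cons.prems by simp
      moreover have "word_eval G ?x = \<one>"
        using Cons.prems by (simp add: ev_append ev_winv ev_closed del: word_over_Cons)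
      ultimately show ?thesis using nonempty_ne_one[of ?x] by simp
    qed
  qed
qed

lemma word_length_eq: "word_over S w \<Longrightarrow> reduced w \<Longrightarrow> word_length G S (word_eval G w) = length w"
  unfolding word_length_def
  by (rule arg_cong[of _ _ length], rule the_equality) (auto intro: reduced_unique)

end

context group begin

lemma coset_eq_iff:
  assumes "subgroup H G" "a \<in> carrier G" "b \<in> carrier G"
  shows "H #> a = H #> b \<longleftrightarrow> a \<otimes> inv b \<in> H"
proof
  assume "H #> a = H #> b" then have "a \<in> H #> b" using rcos_self assms by metis
  then show "a \<otimes> inv b \<in> H" using subgroup.rcos_module_imp[OF assms(1) is_group assms(3)] by blast
next
  assume "a \<otimes> inv b \<in> H"
  then have "a \<in> H #> b" using subgroup.rcos_module_rev[OF assms(1) is_group assms(3) assms(2)] by blast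
  then show "H #> a = H #> b" using repr_independence assms by metis
qed

lemma coset_mult_eq:
  assumes "subgroup H G" "a \<in> carrier G" "b \<in> carrier G" "c \<in> carrier G" "H #> a = H #> b"
  shows "H #> (a \<otimes> c) = H #> (b \<otimes> c)"
  by (metis assms coset_mult_assoc subgroup.subset)

lemma coset_mult_cancel:
  assumes "subgroup H G" "a \<in> carrier G" "b \<in> carrier G" "c \<in> carrier G"
    "H #> (a \<otimes> c) = H #> (b \<otimes> c)"
  shows "H #> a = H #> b"
proof -
  have "H #> (a \<otimes> c \<otimes> inv c) = H #> (b \<otimes> c \<otimes> inv c)"
    using coset_mult_eq[OF assms(1) _ _ _ assms(5)] assms by simp
  then show ?thesis using assms by (simp add: m_assoc)
qed

end

context fb begin

lemma ev_snoc: "word_over S w \<Longrightarrow> fst l \<in> S \<Longrightarrow> word_eval G (w @ [l]) = word_eval G w \<otimes> lval G l"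
  using S_carrier by (simp add: ev_append word_eval_Cons lval_closed subsetD)

lemma ev_single: "fst l \<in> carrier G \<Longrightarrow> word_eval G [l] = lval G l"
  by (simp add: word_eval_Cons lval_closed)

lemma ev_cancel_mid:
  assumes "word_over S P" "word_over S d" "word_over S V"
  shows "word_eval G (P @ winv d @ d @ V) = word_eval G (P @ V)"
  using assms by (simp add: ev_append ev_winv ev_closed m_assoc[symmetric])

end

locale schreier = fb +
  fixes H T
  assumes H_sub: "subgroup H G"
    and T_words: "t \<in> T \<Longrightarrow> word_over S t"
    and T_red: "t \<in> T \<Longrightarrow> reduced t"
    and T_pref: "u @ v \<in> T \<Longrightarrow> u \<in> T"
    and T_inj: "t \<in> T \<Longrightarrow> t' \<in> T \<Longrightarrow> H #> word_eval G t = H #> word_eval G t' \<Longrightarrow> t = t'"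
    and T_surj: "g \<in> carrier G \<Longrightarrow> \<exists>t\<in>T. H #> word_eval G t = H #> g"
begin

definition rep :: "'a \<Rightarrow> ('a \<times> bool) list" where
  "rep g = (THE t. t \<in> T \<and> H #> word_eval G t = H #> g)"

lemma rep: "g \<in> carrier G \<Longrightarrow> rep g \<in> T \<and> H #> word_eval G (rep g) = H #> g"
  unfolding rep_def using T_surj[of g] T_inj by (smt (verit) theI)

lemma rep_eq: "t \<in> T \<Longrightarrow> g \<in> carrier G \<Longrightarrow> H #> word_eval G t = H #> g \<Longrightarrow> rep g = t"
  using rep T_inj by metis

lemma Nil_T: "[] \<in> T"
  using T_surj[of \<one>] T_pref[of "[]"] by auto

lemma evT: "t \<in> T \<Longrightarrow> word_eval G t \<in> carrier G"
  using T_words ev_closed by blast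

lemma SC: "x \<in> S \<Longrightarrow> x \<in> carrier G" using S_carrier by auto

definition mid :: "('a \<times> bool) list \<Rightarrow> 'a \<times> bool \<Rightarrow> ('a \<times> bool) list \<Rightarrow> bool" where
  "mid a m c \<longleftrightarrow> a \<in> T \<and> c \<in> T \<and> fst m \<in> S \<and> reduced (a @ [m]) \<and> reduced (c @ [linv m]) \<and>
     a @ [m] \<notin> T \<and> c @ [linv m] \<notin> T \<and> H #> word_eval G (a @ [m]) = H #> word_eval G c"

lemma mid_sym:
  assumes "mid a m c" shows "mid c (linv m) a"
proof -
  have a: "a \<in> T" "c \<in> T" "fst m \<in> S" using assms by (auto simp: mid_def)
  have mc: "lval G m \<in> carrier G" using a by (simp add: SC lval_closed)
  have "H #> word_eval G (c @ [linv m]) = H #> (word_eval G c \<otimes> inv (lval G m))"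
    using a by (simp add: ev_snoc T_words linv_def lval_linv[symmetric] SC)
  also have "\<dots> = H #> (word_eval G (a @ [m]) \<otimes> inv (lval G m))"
    using assms a mc by (intro coset_mult_eq[OF H_sub]) (auto simp: mid_def evT T_words ev_closed)
  also have "\<dots> = H #> word_eval G a"
    using a mc by (simp add: ev_snoc T_words evT m_assoc)
  finally show ?thesis using assms by (auto simp: mid_def linv_def)
qed

lemma mid_word: assumes "mid a m c"
  shows "reduced (a @ [m] @ winv c)" "word_over S (a @ [m] @ winv c)"
proof -
  have "c \<noteq> [] \<Longrightarrow> last c \<noteq> m" using assms reduced_append[of c "[linv m]"]
    by (auto simp: mid_def)
  moreover have "reduced c" using assms T_red by (auto simp: mid_def)
  ultimately show "reduced (a @ [m] @ winv c)" using assms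
    using reduced_append[of "a @ [m]" "winv c"] by (auto simp: mid_def hd_winv)
  show "word_over S (a @ [m] @ winv c)" using assms T_words by (auto simp: mid_def)
qed

lemma mid_in_H: assumes "mid a m c" shows "word_eval G (a @ [m] @ winv c) \<in> H"
proof -
  have w: "word_over S a" "word_over S c" "word_over S [m]" using assms T_words by (auto simp: mid_def)
  have "word_eval G ((a @ [m]) @ winv c) = word_eval G (a @ [m]) \<otimes> inv (word_eval G c)"
    using w ev_append[of "a @ [m]" "winv c"] by (simp add: ev_winv del: append_assoc)
  moreover have "word_eval G (a @ [m]) \<in> carrier G" "word_eval G c \<in> carrier G"
    using w ev_closed by auto
  ultimately show ?thesis using assms coset_eq_iff[OF H_sub] by (simp add: mid_def)
qed

lemma mid_unique:
  assumes "mid a m c" "mid a' m' c'" "a @ [m] @ winv c = a' @ [m'] @ winv c'"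
  shows "a = a' \<and> m = m' \<and> c = c'"
proof -
  have pre: False if "mid a m c" "mid a' m' c'" "a @ [m] @ winv c = a' @ [m'] @ winv c'"
     "length a < length a'" for a m c a' m' c'
  proof -
    have "take (Suc (length a)) (a' @ [m'] @ winv c') = take (Suc (length a)) a'"
      using that(4) by simp
    moreover have "take (Suc (length a)) (a @ [m] @ winv c) = a @ [m]" by simp
    ultimately have "a' = (a @ [m]) @ drop (Suc (length a)) a'"
      using that(3) by (metis append_take_drop_id)
    then have "a @ [m] \<in> T" using T_pref that(2) by (metis mid_def)
    then show False using that(1) by (simp add: mid_def)
  qed
  have "length a = length a'" using pre[OF assms] pre[OF assms(2,1) assms(3)[symmetric]]
    by (meson linorder_neqE_nat)
  then show ?thesis using assms(3) by (auto dest: arg_cong[of _ _ winv])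
qed

definition B :: "'a set" where
  "B = {word_eval G (t @ [(x, True)] @ winv (rep (word_eval G t \<otimes> x))) | t x.
          t \<in> T \<and> x \<in> S \<and> reduced (t @ [(x, True)]) \<and>
          \<not> (rep (word_eval G t \<otimes> x) \<noteq> [] \<and> last (rep (word_eval G t \<otimes> x)) = (x, True))}"

lemma B_mid:
  assumes "t \<in> T" "x \<in> S" "reduced (t @ [(x, True)])"
    "\<not> (rep (word_eval G t \<otimes> x) \<noteq> [] \<and> last (rep (word_eval G t \<otimes> x)) = (x, True))"
  shows "mid t (x, True) (rep (word_eval G t \<otimes> x))"
proof -
  let ?u = "rep (word_eval G t \<otimes> x)"
  have gc: "word_eval G t \<otimes> x \<in> carrier G" using assms by (simp add: evT SC)
  have u: "?u \<in> T" "H #> word_eval G ?u = H #> (word_eval G t \<otimes> x)" using rep[OF gc] by auto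
  have e: "word_eval G (t @ [(x, True)]) = word_eval G t \<otimes> x"
    using assms by (simp add: ev_snoc T_words lval_def)
  have "?u \<noteq> [] \<Longrightarrow> hd [(x,False)] \<noteq> linv (last ?u)"
    using assms(4) by (cases "last ?u") (auto simp: linv_def)
  then have r1: "reduced (?u @ [(x, False)])"
    using T_red[OF u(1)] reduced_append[of ?u "[(x,False)]"] by auto
  have n1: "t @ [(x, True)] \<notin> T"
  proof
    assume "t @ [(x, True)] \<in> T"
    then have "?u = t @ [(x, True)]" using rep_eq[OF _ gc] e by simp
    then show False using assms(4) by simp
  qed
  have n2: "?u @ [(x, False)] \<notin> T"
  proof
    assume a: "?u @ [(x, False)] \<in> T"
    have "word_eval G (?u @ [(x, False)]) = word_eval G ?u \<otimes> inv x"
      using u assms by (simp add: ev_snoc T_words lval_def)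
    then have "H #> word_eval G (?u @ [(x, False)]) = H #> (word_eval G t \<otimes> x \<otimes> inv x)"
      using u gc assms by (simp add: coset_mult_eq[OF H_sub] evT SC)
    also have "\<dots> = H #> word_eval G t" using assms by (simp add: m_assoc evT SC)
    finally have "?u @ [(x, False)] = t" using T_inj a assms(1) by blast
    then have "reduced (?u @ [(x,False),(x,True)])" using assms(3)
      by (metis append_Cons append_Nil append_assoc)
    then have "reduced [(x,False),(x,True)]" using reduced_append[of ?u "[(x,False),(x,True)]"]
      by blast
    then show False by simp
  qed
  show ?thesis unfolding mid_def using assms u r1 n1 n2 e by (simp add: linv_def)
qed

lemma B_dec: "b \<in> B \<Longrightarrow> \<exists>t x u. mid t (x, True) u \<and> b = word_eval G (t @ [(x, True)] @ winv u)"
  unfolding B_def using B_mid by blast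

lemma B_H: "B \<subseteq> H" using B_dec mid_in_H by blast

lemma B_carrier: "B \<subseteq> carrier G" using B_H subgroup.subset[OF H_sub] by blast

lemma letter_dec:
  assumes "fst l \<in> B"
  shows "\<exists>a m c. mid a m c \<and> snd m = snd l \<and> lval G l = word_eval G (a @ [m] @ winv c)"
proof -
  obtain t x u where d: "mid t (x, True) u" "fst l = word_eval G (t @ [(x, True)] @ winv u)"
    using B_dec assms by blast
  show ?thesis
  proof (cases "snd l")
    case True
    then show ?thesis using d by (intro exI[of _ t] exI[of _ "(x,True)"] exI[of _ u]) (simp add: lval_def)
  next
    case False
    have W: "word_eval G (winv (t @ [(x, True)] @ winv u)) = inv (word_eval G (t @ [(x, True)] @ winv u))"
      using ev_winv mid_word(2)[OF d(1)] by blast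
    have "lval G l = inv (fst l)" using False by (simp add: lval_def)
    then have "lval G l = word_eval G (winv (t @ [(x, True)] @ winv u))"
      using W d(2) by metis
    also have "winv (t @ [(x, True)] @ winv u) = u @ [(x, False)] @ winv t"
      by (simp add: winv_Cons linv_def)
    finally show ?thesis using False mid_sym[OF d(1)]
      by (intro exI[of _ u] exI[of _ "(x,False)"] exI[of _ t]) (simp add: linv_def)
  qed
qed

end

context schreier begin

lemma mid_words: "mid a m c \<Longrightarrow> word_over S a \<and> word_over S c \<and> fst m \<in> S"
  using T_words by (auto simp: mid_def)

lemma free_aux:
  assumes "word_over B ws" "reduced ws" "ws \<noteq> []"
  shows "\<exists>a m c Q. mid a m c \<and> snd m = snd (hd ws) \<and>
     lval G (hd ws) = word_eval G (a @ [m] @ winv c) \<and> word_over S Q \<and>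
     reduced (a @ [m] @ Q) \<and> word_eval G (a @ [m] @ Q) = word_eval G ws"
  using assms
proof (induction ws)
  case Nil then show ?case by simp
next
  case (Cons l ws)
  have lB: "fst l \<in> B" using Cons.prems by simp
  obtain a1 m1 c1 where d1: "mid a1 m1 c1" "snd m1 = snd l"
      "lval G l = word_eval G (a1 @ [m1] @ winv c1)"
    using letter_dec[OF lB] by blast
  have w1: "word_over S a1" "word_over S c1" "fst m1 \<in> S" using mid_words[OF d1(1)] by auto
  have lc: "lval G l \<in> carrier G" using lB B_carrier by (auto intro: lval_closed)
  show ?case
  proof (cases "ws = []")
    case True
    have "word_eval G (l # ws) = lval G l" using True lc by (simp add: word_eval_Cons)
    then show ?thesis using d1 w1 mid_word[OF d1(1)] True
      by (intro exI[of _ a1] exI[of _ m1] exI[of _ c1] exI[of _ "winv c1"]) simp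
  next
    case False
    have wsB: "word_over B ws" "reduced ws" using Cons.prems reduced_ConsD[of l ws] by auto
    obtain a2 m2 c2 Q where d2: "mid a2 m2 c2" "snd m2 = snd (hd ws)"
        "lval G (hd ws) = word_eval G (a2 @ [m2] @ winv c2)" "word_over S Q"
        "reduced (a2 @ [m2] @ Q)" "word_eval G (a2 @ [m2] @ Q) = word_eval G ws"
      using Cons.IH[OF wsB False] by blast
    have w2: "word_over S a2" "word_over S c2" "fst m2 \<in> S" using mid_words[OF d2(1)] by auto
    have hd_ne: "hd ws \<noteq> linv l" using Cons.prems(2) False
      by (cases ws) (auto simp: reduced_Cons2)
    obtain d c' a' where lcp: "c1 = d @ c'" "a2 = d @ a'" "c' = [] \<or> a' = [] \<or> hd c' \<noteq> hd a'"
      using longest_common_prefix[of c1 a2] by blast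
    have wd: "word_over S d" "word_over S c'" "word_over S a'" using lcp w1 w2 by auto
    let ?P = "a1 @ [m1] @ winv c'"
    let ?V = "a' @ [m2] @ Q"
    have ev1: "word_eval G (?P @ ?V) = word_eval G (l # ws)"
    proof -
      have "word_eval G (?P @ ?V) = word_eval G (?P @ winv d @ d @ ?V)"
        using wd w1 w2 d2(4) by (subst ev_cancel_mid) auto
      also have "?P @ winv d @ d @ ?V = (a1 @ [m1] @ winv c1) @ (a2 @ [m2] @ Q)"
        using lcp by simp
      also have "word_eval G \<dots> = lval G l \<otimes> word_eval G ws"
        using d1(3) d2(6) wd w1 w2 d2(4) lcp by (subst ev_append) auto
      finally show ?thesis by (simp add: word_eval_Cons)
    qed
    have rP: "reduced ?P"
    proof -
      have "reduced (?P @ winv d)" using mid_word(1)[OF d1(1)] lcp by simp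
      then show ?thesis using reduced_append by blast
    qed
    have rV: "reduced ?V"
    proof -
      have "reduced (d @ ?V)" using d2(5) lcp by simp
      then show ?thesis using reduced_append by blast
    qed
    have junc: "hd ?V \<noteq> linv (last ?P)"
    proof (cases "c' = []")
      case cnil: True
      show ?thesis
      proof (cases "a' = []")
        case anil: True
        show ?thesis
        proof
          assume "hd ?V = linv (last ?P)"
          then have m2: "m2 = linv m1" using cnil anil by simp
          have ca: "c1 = a2" using lcp cnil anil by simp
          have "H #> word_eval G c2 = H #> word_eval G (a2 @ [m2])"
            using d2(1) by (simp add: mid_def)
          also have "\<dots> = H #> word_eval G a1"
            using mid_sym[OF d1(1)] ca m2 by (simp add: mid_def)
          finally have "c2 = a1" using T_inj d1(1) d2(1) by (auto simp: mid_def)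
          then have "a2 @ [m2] @ winv c2 = winv (a1 @ [m1] @ winv c1)"
            using ca m2 by (simp add: winv_Cons)
          then have "lval G (hd ws) = inv (lval G l)"
            using d2(3) d1(3) ev_winv mid_word(2)[OF d1(1)] by metis
          moreover have "snd (hd ws) = (\<not> snd l)" using d2(2) d1(2) m2 by (simp add: linv_def)
          moreover have "fst (hd ws) \<in> carrier G" "fst l \<in> carrier G"
            using wsB(1) False lB B_carrier by (cases ws; auto)+
          ultimately have "hd ws = linv l"
            by (cases l; cases "hd ws"; cases "snd l") (auto simp: lval_def linv_def dest: inv_inj[THEN inj_onD])
          then show False using hd_ne by simp
        qed
      next
        case anz: False
        show ?thesis
        proof
          assume "hd ?V = linv (last ?P)"
          then have h: "hd a' = linv m1" using cnil anz by simp
          have "a2 = (c1 @ [linv m1]) @ tl a'" using lcp cnil h anz by (cases a') auto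
          then have "c1 @ [linv m1] \<in> T" using T_pref d2(1) by (metis mid_def)
          then show False using d1(1) by (simp add: mid_def)
        qed
      qed
    next
      case cnz: False
      show ?thesis
      proof (cases "a' = []")
        case anil: True
        show ?thesis
        proof
          assume "hd ?V = linv (last ?P)"
          then have h: "m2 = hd c'" using cnz anil by (simp add: last_winv)
          have "c1 = (a2 @ [m2]) @ tl c'" using lcp anil h cnz by (cases c') auto
          then have "a2 @ [m2] \<in> T" using T_pref d1(1) by (metis mid_def)
          then show False using d2(1) by (simp add: mid_def)
        qed
      next
        case anz: False
        then show ?thesis using cnz lcp by (simp add: last_winv)
      qed
    qed
    have "reduced (?P @ ?V)" using rP rV junc reduced_append by blast
    moreover have "word_over S (winv c' @ ?V)" using wd d2(4) w2 by simp
    ultimately show ?thesis using d1 ev1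
      by (intro exI[of _ a1] exI[of _ m1] exI[of _ c1] exI[of _ "winv c' @ ?V"]) simp
  qed
qed

lemma B_free: "word_over B ws \<Longrightarrow> reduced ws \<Longrightarrow> ws \<noteq> [] \<Longrightarrow> word_eval G ws \<noteq> \<one>"
proof -
  assume a: "word_over B ws" "reduced ws" "ws \<noteq> []"
  then obtain a m c Q where d: "mid a m c" "word_over S Q" "reduced (a @ [m] @ Q)"
     "word_eval G (a @ [m] @ Q) = word_eval G ws"
    using free_aux by blast
  have "word_over S (a @ [m] @ Q)" using d mid_words by auto
  then show ?thesis using nonempty_ne_one[of "a @ [m] @ Q"] d by simp
qed

end

context group begin
lemma inv_cancel_left': "x \<in> carrier G \<Longrightarrow> z \<in> carrier G \<Longrightarrow> inv x \<otimes> (x \<otimes> z) = z"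
  by (simp add: m_assoc[symmetric])
end

context schreier begin

lemma rep_closed: "g \<in> carrier G \<Longrightarrow> word_eval G (rep g) \<in> carrier G"
  using rep evT by blast

lemma gpos_gen:
  assumes t: "t \<in> T" and x: "x \<in> S"
  shows "word_eval G t \<otimes> x \<otimes> inv (word_eval G (rep (word_eval G t \<otimes> x))) \<in> generate G B"
proof -
  let ?u = "rep (word_eval G t \<otimes> x)"
  have xc: "x \<in> carrier G" using x SC by auto
  have tc: "word_eval G t \<in> carrier G" using t evT by auto
  have gc: "word_eval G t \<otimes> x \<in> carrier G" using xc tc by simp
  have u: "?u \<in> T" "H #> word_eval G ?u = H #> (word_eval G t \<otimes> x)" using rep[OF gc] by auto
  have uc: "word_eval G ?u \<in> carrier G" using u evT by auto
  show ?thesis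
  proof (cases "t \<noteq> [] \<and> last t = (x, False)")
    case True
    define t' where "t' = butlast t"
    have tt: "t = t' @ [(x, False)]" using True unfolding t'_def by (metis append_butlast_last_id)
    have t': "t' \<in> T" using tt t T_pref by blast
    have t'c: "word_eval G t' \<in> carrier G" using t' evT by auto
    have et: "word_eval G t = word_eval G t' \<otimes> inv x"
      using tt t' x by (simp add: ev_snoc T_words lval_def)
    have e2: "word_eval G t \<otimes> x = word_eval G t'" using et t'c xc by (simp add: m_assoc)
    have "?u = t'" using e2 rep_eq[OF t' t'c] by simp
    then have "word_eval G t \<otimes> x \<otimes> inv (word_eval G ?u) = \<one>" using e2 t'c by simp
    then show ?thesis by (simp add: generate.one)
  next
    case notA: False
    show ?thesis
    proof (cases "?u \<noteq> [] \<and> last ?u = (x, True)")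
      case True
      define u' where "u' = butlast ?u"
      have uu: "?u = u' @ [(x, True)]" using True unfolding u'_def by (metis append_butlast_last_id)
      have u': "u' \<in> T" using uu u T_pref by metis
      have u'c: "word_eval G u' \<in> carrier G" using u' evT by auto
      have eu: "word_eval G ?u = word_eval G u' \<otimes> x"
        using uu u' x by (metis ev_snoc T_words lval_def fst_conv snd_conv)
      have "H #> word_eval G u' = H #> word_eval G t"
        using coset_mult_cancel[OF H_sub u'c tc xc] u(2) eu by simp
      then have "u' = t" using T_inj u' t by blast
      then have "word_eval G t \<otimes> x \<otimes> inv (word_eval G ?u) = \<one>" using eu gc by simp
      then show ?thesis by (simp add: generate.one)
    next
      case notB: False
      have "t \<noteq> [] \<Longrightarrow> hd [(x, True)] \<noteq> linv (last t)"
        using notA by (cases "last t") (auto simp: linv_def)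
      then have red: "reduced (t @ [(x, True)])" using T_red[OF t] reduced_append[of t] by auto
      have "word_eval G (t @ [(x, True)] @ winv ?u) \<in> B"
        unfolding B_def using t x red notB by blast
      moreover have "word_eval G (t @ [(x, True)] @ winv ?u) = word_eval G t \<otimes> x \<otimes> inv (word_eval G ?u)"
        using t x u T_words xc by (simp add: ev_append ev_winv word_eval_Cons lval_def m_assoc uc tc)
      ultimately show ?thesis by (simp add: generate.incl)
    qed
  qed
qed

lemma gletter_gen:
  assumes t: "t \<in> T" and l: "fst l \<in> S"
  shows "word_eval G t \<otimes> lval G l \<otimes> inv (word_eval G (rep (word_eval G t \<otimes> lval G l))) \<in> generate G B"
proof (cases "snd l")
  case True
  then show ?thesis using gpos_gen[OF t l] by (simp add: lval_def)
next
  case False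
  let ?x = "fst l"
  have xc: "?x \<in> carrier G" using l SC by auto
  have tc: "word_eval G t \<in> carrier G" using t evT by auto
  have lv: "lval G l = inv ?x" using False by (simp add: lval_def)
  let ?v = "rep (word_eval G t \<otimes> inv ?x)"
  have gc: "word_eval G t \<otimes> inv ?x \<in> carrier G" using xc tc by simp
  have v: "?v \<in> T" "H #> word_eval G ?v = H #> (word_eval G t \<otimes> inv ?x)" using rep[OF gc] by auto
  have vc: "word_eval G ?v \<in> carrier G" using v evT by auto
  have "H #> (word_eval G ?v \<otimes> ?x) = H #> (word_eval G t \<otimes> inv ?x \<otimes> ?x)"
    using coset_mult_eq[OF H_sub vc gc xc v(2)] .
  also have "\<dots> = H #> word_eval G t" using tc xc by (simp add: m_assoc)
  finally have "rep (word_eval G ?v \<otimes> ?x) = t" using rep_eq[OF t] vc xc by simp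
  then have "word_eval G ?v \<otimes> ?x \<otimes> inv (word_eval G t) \<in> generate G B"
    using gpos_gen[OF v(1) l] by simp
  then have "inv (word_eval G ?v \<otimes> ?x \<otimes> inv (word_eval G t)) \<in> generate G B"
    using generate_m_inv_closed B_carrier by blast
  moreover have "inv (word_eval G ?v \<otimes> ?x \<otimes> inv (word_eval G t)) = word_eval G t \<otimes> inv ?x \<otimes> inv (word_eval G ?v)"
    using vc xc tc by (simp add: inv_mult_group m_assoc)
  ultimately show ?thesis using lv by simp
qed

lemma rep_cong: "g \<in> carrier G \<Longrightarrow> h \<in> carrier G \<Longrightarrow> H #> g = H #> h \<Longrightarrow> rep g = rep h"
  using rep rep_eq by metis

lemma gen_all:
  "t \<in> T \<Longrightarrow> word_over S w \<Longrightarrow>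
    word_eval G t \<otimes> word_eval G w \<otimes> inv (word_eval G (rep (word_eval G t \<otimes> word_eval G w))) \<in> generate G B"
proof (induction w arbitrary: t)
  case Nil
  have tc: "word_eval G t \<in> carrier G" using Nil evT by auto
  have "rep (word_eval G t) = t" using rep_eq[OF Nil(1) tc] by simp
  then show ?case using tc by (simp add: generate.one)
next
  case (Cons l w)
  have tc: "word_eval G t \<in> carrier G" using Cons evT by auto
  have lS: "fst l \<in> S" and wS: "word_over S w" using Cons by auto
  have lc: "lval G l \<in> carrier G" using lS SC lval_closed by auto
  have wc: "word_eval G w \<in> carrier G" using wS ev_closed by auto
  let ?t2 = "rep (word_eval G t \<otimes> lval G l)"
  have t2: "?t2 \<in> T" "H #> word_eval G ?t2 = H #> (word_eval G t \<otimes> lval G l)"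
    using rep[of "word_eval G t \<otimes> lval G l"] tc lc by auto
  have t2c: "word_eval G ?t2 \<in> carrier G" using t2 evT by auto
  have g1: "word_eval G t \<otimes> lval G l \<otimes> inv (word_eval G ?t2) \<in> generate G B"
    using gletter_gen[OF Cons(2) lS] .
  have g2: "word_eval G ?t2 \<otimes> word_eval G w \<otimes> inv (word_eval G (rep (word_eval G ?t2 \<otimes> word_eval G w))) \<in> generate G B"
    using Cons.IH[OF t2(1) wS] .
  have "H #> (word_eval G ?t2 \<otimes> word_eval G w) = H #> (word_eval G t \<otimes> lval G l \<otimes> word_eval G w)"
    using coset_mult_eq[OF H_sub t2c _ wc t2(2)] tc lc by simp
  then have rr: "rep (word_eval G ?t2 \<otimes> word_eval G w) = rep (word_eval G t \<otimes> (lval G l \<otimes> word_eval G w))"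
    using rep_cong t2c wc tc lc by (simp add: m_assoc)
  let ?e = "word_eval G (rep (word_eval G t \<otimes> (lval G l \<otimes> word_eval G w)))"
  have ec: "?e \<in> carrier G" using rep_closed tc lc wc by simp
  have "(word_eval G t \<otimes> lval G l \<otimes> inv (word_eval G ?t2)) \<otimes>
        (word_eval G ?t2 \<otimes> word_eval G w \<otimes> inv ?e) \<in> generate G B"
    using g1 g2 rr by (simp add: generate.eng)
  moreover have "(word_eval G t \<otimes> lval G l \<otimes> inv (word_eval G ?t2)) \<otimes>
        (word_eval G ?t2 \<otimes> word_eval G w \<otimes> inv ?e) =
        word_eval G t \<otimes> (lval G l \<otimes> word_eval G w) \<otimes> inv ?e"
    using tc lc wc t2c ec by (simp add: m_assoc inv_cancel_left')
  ultimately show ?case by (simp add: word_eval_Cons)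
qed

lemma generate_B: "generate G B = H"
proof
  show "generate G B \<subseteq> H" using generate_subgroup_incl[OF B_H H_sub] .
next
  show "H \<subseteq> generate G B"
  proof
    fix h assume hH: "h \<in> H"
    then have hc: "h \<in> carrier G" using subgroup.subset[OF H_sub] by auto
    obtain w where w: "word_over S w" "word_eval G w = h" using exists_word[OF hc] by blast
    have "H #> word_eval G [] = H #> h"
      using hH subgroup.rcos_const[OF H_sub is_group] coset_mult_one subgroup.subset[OF H_sub] by simp
    then have "rep h = []" using rep_eq[OF Nil_T hc] by simp
    then show "h \<in> generate G B" using gen_all[OF Nil_T w(1)] w(2) hc by simp
  qed
qed

lemma word_eval_sub: "word_over B ws \<Longrightarrow> word_eval (G\<lparr>carrier := H\<rparr>) ws = word_eval G ws"
proof (induction ws)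
  case (Cons l ws)
  then have "fst l \<in> H" using B_H by auto
  then show ?case using Cons by (cases l) (simp add: m_inv_consistent[OF H_sub])
qed simp

theorem B_free_basis: "free_basis (G\<lparr>carrier := H\<rparr>) B"
  unfolding free_basis_def
  using B_H generate_consistent[OF B_H H_sub] generate_B B_free word_eval_sub by simp

end

context schreier begin

lemma last_letter_B:
  assumes w: "w \<noteq> []" "word_over S w" "reduced w" "butlast w \<in> T" "word_eval G w \<in> H"
  shows "word_eval G w \<in> B \<or> inv (word_eval G w) \<in> B"
proof -
  define t where "t = butlast w"
  obtain x b where l: "last w = (x, b)" by (cases "last w")
  have wt: "w = t @ [(x, b)]" using w(1) l unfolding t_def by (metis append_butlast_last_id)
  have t: "t \<in> T" using w(4) t_def by simp
  have x: "x \<in> S" using w(2) wt by simp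
  have xc: "x \<in> carrier G" using x SC by auto
  have tc: "word_eval G t \<in> carrier G" using t evT by auto
  have HH: "H #> word_eval G [] = H #> g" if "g \<in> H" for g
    using that subgroup.rcos_const[OF H_sub is_group] coset_mult_one subgroup.subset[OF H_sub] by simp
  show ?thesis
  proof (cases b)
    case True
    have e: "word_eval G w = word_eval G t \<otimes> x"
      using wt t x True by (simp add: ev_snoc T_words lval_def)
    then have "rep (word_eval G t \<otimes> x) = []" using rep_eq[OF Nil_T] HH w(5) tc xc by simp
    moreover have "reduced (t @ [(x, True)])" using w(3) wt True by simp
    moreover have "word_eval G (t @ [(x, True)] @ winv (rep (word_eval G t \<otimes> x))) \<in> B"
      unfolding B_def using t x calculation by blast
    ultimately show ?thesis using wt True by simp
  next
    case False
    have e: "word_eval G w = word_eval G t \<otimes> inv x"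
      using wt t x False by (simp add: ev_snoc T_words lval_def)
    have "H #> word_eval G t = H #> x"
      using coset_eq_iff[OF H_sub tc xc] w(5) e by simp
    then have rx: "rep (word_eval G [] \<otimes> x) = t" using rep_eq[OF t] xc by simp
    have nl: "\<not> (t \<noteq> [] \<and> last t = (x, True))"
    proof
      assume "t \<noteq> [] \<and> last t = (x, True)"
      then have "\<not> reduced (t @ [(x,False)])" using reduced_append[of t "[(x,False)]"] by (simp add: linv_def)
      then show False using w(3) wt False by simp
    qed
    have "word_eval G ([] @ [(x, True)] @ winv (rep (word_eval G [] \<otimes> x))) \<in> B"
      unfolding B_def using Nil_T x nl rx by (intro CollectI exI[of _ "[]"] exI[of _ x]) simp
    moreover have "word_eval G ([] @ [(x, True)] @ winv t) = inv (word_eval G w)"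
      using e t x xc tc T_words by (simp add: word_eval_Cons ev_winv lval_def inv_mult_group)
    ultimately show ?thesis using rx by simp
  qed
qed

end

context fb begin

definition psys :: "'a set \<Rightarrow> ('a \<times> bool) list set \<Rightarrow> bool" where
  "psys H P \<longleftrightarrow> (\<forall>t\<in>P. word_over S t \<and> reduced t) \<and> (\<forall>u v. u @ v \<in> P \<longrightarrow> u \<in> P) \<and>
     (\<forall>t\<in>P. \<forall>t'\<in>P. H #> word_eval G t = H #> word_eval G t' \<longrightarrow> t = t') \<and> [] \<in> P"

lemma append_eq_snoc_cases: "u @ v = t @ [l] \<Longrightarrow> u = t @ [l] \<or> (\<exists>v'. u @ v' = t)"
  by (cases v rule: rev_exhaust) auto

lemma extend_sys:
  assumes H: "subgroup H G" and fin: "finite (rcosets H)" and P: "psys H P"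
  shows "\<exists>T. P \<subseteq> T \<and> schreier G S H T"
  using P
proof (induction "card (rcosets H) - card ((\<lambda>t. H #> word_eval G t) ` P)" arbitrary: P rule: less_induct)
  case less
  let ?img = "\<lambda>P. (\<lambda>t. H #> word_eval G t) ` P"
  have Hc: "H \<subseteq> carrier G" using H subgroup.subset by blast
  have imgsub: "?img P \<subseteq> rcosets H"
    using less.prems Hc by (auto simp: psys_def intro!: rcosetsI ev_closed)
  show ?case
  proof (cases "?img P = rcosets H")
    case True
    have "schreier G S H P"
    proof (rule schreier.intro[OF fb_axioms], rule schreier_axioms.intro)
      show "subgroup H G" by (rule H)
      show "\<And>t. t \<in> P \<Longrightarrow> word_over S t" "\<And>t. t \<in> P \<Longrightarrow> reduced t"
        "\<And>u v. u @ v \<in> P \<Longrightarrow> u \<in> P"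
        "\<And>t t'. t \<in> P \<Longrightarrow> t' \<in> P \<Longrightarrow> H #> word_eval G t = H #> word_eval G t' \<Longrightarrow> t = t'"
        using less.prems by (auto simp: psys_def)
      show "\<And>g. g \<in> carrier G \<Longrightarrow> \<exists>t\<in>P. H #> word_eval G t = H #> g"
      proof -
        fix g assume "g \<in> carrier G"
        then have "H #> g \<in> ?img P" using True Hc rcosetsI by blast
        then show "\<exists>t\<in>P. H #> word_eval G t = H #> g" by auto
      qed
    qed
    then show ?thesis by blast
  next
    case False
    have ex: "\<exists>t\<in>P. \<exists>l. fst l \<in> S \<and> H #> word_eval G (t @ [l]) \<notin> ?img P"
    proof (rule ccontr)
      assume "\<not> ?thesis"
      then have cl: "\<And>t l. t \<in> P \<Longrightarrow> fst l \<in> S \<Longrightarrow> H #> word_eval G (t @ [l]) \<in> ?img P" by blast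
      have all: "word_over S w \<Longrightarrow> H #> word_eval G w \<in> ?img P" for w
      proof (induction w rule: rev_induct)
        case Nil then show ?case using less.prems by (auto simp: psys_def intro!: image_eqI[where x="[]"])
      next
        case (snoc l w)
        then obtain t where t: "t \<in> P" "H #> word_eval G w = H #> word_eval G t" by auto
        have tw: "word_over S t" using t less.prems by (auto simp: psys_def)
        have "H #> word_eval G (w @ [l]) = H #> (word_eval G w \<otimes> lval G l)"
          using snoc by (simp add: ev_snoc)
        also have "\<dots> = H #> (word_eval G t \<otimes> lval G l)"
          using t snoc tw S_carrier by (intro coset_mult_eq[OF H]) (auto intro!: ev_closed lval_closed)
        also have "\<dots> = H #> word_eval G (t @ [l])" using snoc tw by (simp add: ev_snoc)
        finally show ?case using cl[OF t(1)] snoc by simp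
      qed
      have "rcosets H \<subseteq> ?img P"
      proof
        fix C assume "C \<in> rcosets H"
        then obtain g where g: "g \<in> carrier G" "C = H #> g" unfolding RCOSETS_def by auto
        obtain w where "word_over S w" "word_eval G w = g" using exists_word[OF g(1)] by blast
        then show "C \<in> ?img P" using all g by metis
      qed
      then show False using False imgsub by blast
    qed
    then obtain t l where tl: "t \<in> P" "fst l \<in> S" "H #> word_eval G (t @ [l]) \<notin> ?img P" by blast
    have tw: "word_over S t" "reduced t" using tl less.prems by (auto simp: psys_def)
    have red: "reduced (t @ [l])"
    proof -
      have "t \<noteq> [] \<Longrightarrow> hd [l] \<noteq> linv (last t)"
      proof
        assume ne: "t \<noteq> []" and eq: "hd [l] = linv (last t)"
        define t' where "t' = butlast t"
        have tt: "t = t' @ [linv l]" using ne eq unfolding t'_def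
          by (metis append_butlast_last_id linv_linv list.sel(1))
        have t': "t' \<in> P" using tt tl less.prems by (auto simp: psys_def)
        have t'w: "word_over S t'" using t' less.prems by (auto simp: psys_def)
        have lc: "fst l \<in> carrier G" using tl S_carrier by auto
        have "word_eval G (t @ [l]) = word_eval G (t' @ [linv l, l])" using tt by simp
        also have "\<dots> = word_eval G t' \<otimes> word_eval G [linv l, l]"
          using t'w tl by (intro ev_append) (auto simp: linv_def)
        also have "word_eval G [linv l, l] = \<one>" using lc
          by (cases l; cases "snd l") (auto simp: linv_def)
        also have "word_eval G t' \<otimes> \<one> = word_eval G t'" using t'w ev_closed by simp
        finally show False using tl(3) t' by auto
      qed
      then show ?thesis using tw reduced_append[of t "[l]"] by auto
    qed
    let ?P' = "insert (t @ [l]) P"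
    have P': "psys H ?P'"
      unfolding psys_def
    proof (intro conjI)
      show "\<forall>t\<in>?P'. word_over S t \<and> reduced t" using less.prems tw tl red by (auto simp: psys_def)
      show "\<forall>u v. u @ v \<in> ?P' \<longrightarrow> u \<in> ?P'"
      proof (intro allI impI)
        fix u v assume "u @ v \<in> ?P'"
        then show "u \<in> ?P'"
        proof
          assume "u @ v = t @ [l]"
          then show ?thesis using append_eq_snoc_cases less.prems tl(1) by (metis insertCI psys_def)
        next
          assume "u @ v \<in> P" then show ?thesis using less.prems by (auto simp: psys_def)
        qed
      qed
      show "\<forall>t\<in>?P'. \<forall>t'\<in>?P'. H #> word_eval G t = H #> word_eval G t' \<longrightarrow> t = t'"
      proof (intro ballI impI)
        fix a b assume ab: "a \<in> ?P'" "b \<in> ?P'" "H #> word_eval G a = H #> word_eval G b"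
        have inj: "\<forall>t\<in>P. \<forall>t'\<in>P. H #> word_eval G t = H #> word_eval G t' \<longrightarrow> t = t'"
          using less.prems by (simp add: psys_def)
        show "a = b"
        proof (cases "a = t @ [l]"; cases "b = t @ [l]")
          assume "a = t @ [l]" "b \<noteq> t @ [l]"
          then show ?thesis using ab tl(3) by (metis image_eqI insertE)
        next
          assume "a \<noteq> t @ [l]" "b = t @ [l]"
          then show ?thesis using ab tl(3) by (metis image_eqI insertE)
        next
          assume "a \<noteq> t @ [l]" "b \<noteq> t @ [l]"
          then show ?thesis using ab inj by blast
        qed simp
      qed
      show "[] \<in> ?P'" using less.prems by (simp add: psys_def)
    qed
    have "?img ?P' = insert (H #> word_eval G (t @ [l])) (?img P)" by simp
    moreover have "finite (?img P)" using fin imgsub finite_subset by blast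
    ultimately have c: "card (?img ?P') = Suc (card (?img P))" using tl(3) by simp
    have "?img ?P' \<subseteq> rcosets H"
      using P' Hc by (auto simp: psys_def intro!: rcosetsI ev_closed)
    then have "card (?img ?P') \<le> card (rcosets H)" using fin card_mono by blast
    then have "card (rcosets H) - card (?img ?P') < card (rcosets H) - card (?img P)"
      using c by simp
    then obtain T where "?P' \<subseteq> T" "schreier G S H T" using less.hyps P' by blast
    then show ?thesis by blast
  qed
qed

end

lemma finite_image_factor:
  assumes "finite (q ` A)" "\<And>a a'. a \<in> A \<Longrightarrow> a' \<in> A \<Longrightarrow> q a = q a' \<Longrightarrow> f a = f a'"
  shows "finite (f ` A)"
proof -
  let ?g = "\<lambda>y. f (SOME a. a \<in> A \<and> q a = y)"
  have "f ` A \<subseteq> ?g ` (q ` A)"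
  proof
    fix z assume "z \<in> f ` A" then obtain a where a: "a \<in> A" "z = f a" by blast
    have sa: "(SOME a'. a' \<in> A \<and> q a' = q a) \<in> A \<and> q (SOME a'. a' \<in> A \<and> q a' = q a) = q a"
      using someI_ex[of "\<lambda>a'. a' \<in> A \<and> q a' = q a"] a by blast
    have "?g (q a) = f a" using assms(2)[OF _ a(1)] sa by blast
    then have "z = ?g (q a)" using a by simp
    moreover have "q a \<in> q ` A" using a by simp
    ultimately show "z \<in> ?g ` (q ` A)" by (rule image_eqI)
  qed
  then show ?thesis using assms(1) finite_subset by blast
qed

context group begin

lemma free_basis_swap:
  assumes fb: "free_basis G B" and b: "b \<in> B"
  shows "free_basis G (insert (inv b) (B - {b}))"
proof -
  let ?B' = "insert (inv b) (B - {b})"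
  have Bc: "B \<subseteq> carrier G" using fb by (simp add: free_basis_def)
  have bc: "b \<in> carrier G" using Bc b by auto
  have B'c: "?B' \<subseteq> carrier G" using Bc bc by auto
  have s1: "?B' \<subseteq> generate G B" using b by (auto intro: generate.inv generate.incl)
  have s2: "B \<subseteq> generate G ?B'"
  proof
    fix y assume y: "y \<in> B"
    show "y \<in> generate G ?B'"
    proof (cases "y = b")
      case True
      have "inv (inv b) \<in> generate G ?B'" by (rule generate.inv) simp
      then show ?thesis using True bc by simp
    next
      case False then show ?thesis using y by (auto intro: generate.incl)
    qed
  qed
  have "generate G ?B' = generate G B"
    using generate_subgroup_incl[OF s1 generate_is_subgroup[OF Bc]]
          generate_subgroup_incl[OF s2 generate_is_subgroup[OF B'c]] by blast
  then have gen: "generate G ?B' = carrier G" using fb by (simp add: free_basis_def)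
  define f where "f l = (if fst l = inv b then (b, \<not> snd l) else l)" for l :: "'a \<times> bool"
  have finj: "p = q" if "fst p \<in> ?B'" "fst q \<in> ?B'" "f p = f q" for p q
  proof (cases "fst p = inv b"; cases "fst q = inv b")
    assume "fst p = inv b" "fst q = inv b"
    then show ?thesis using that(3) by (simp add: f_def prod_eq_iff)
  next
    assume a: "fst p = inv b" "fst q \<noteq> inv b"
    then have "f q = q" "f p = (b, \<not> snd p)" by (simp_all add: f_def)
    then have "fst q = b" using that(3) by (metis fst_conv)
    then show ?thesis using that(2) a by simp
  next
    assume a: "fst p \<noteq> inv b" "fst q = inv b"
    then have "f p = p" "f q = (b, \<not> snd q)" by (simp_all add: f_def)
    then have "fst p = b" using that(3) by (metis fst_conv)
    then show ?thesis using that(1) a by simp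
  next
    assume a: "fst p \<noteq> inv b" "fst q \<noteq> inv b"
    then show ?thesis using that(3) by (simp add: f_def)
  qed
  have flinv: "f (linv l) = linv (f l)" for l by (cases l) (simp add: f_def linv_def)
  have fB: "fst l \<in> ?B' \<Longrightarrow> fst (f l) \<in> B" for l using b by (auto simp: f_def)
  have flv: "fst l \<in> ?B' \<Longrightarrow> lval G (f l) = lval G l" for l
    using bc by (cases l) (auto simp: f_def lval_def)
  have ev: "word_over ?B' ws \<Longrightarrow> word_eval G (map f ws) = word_eval G ws" for ws
    by (induction ws) (auto simp: word_eval_Cons flv)
  have wo: "word_over ?B' ws \<Longrightarrow> word_over B (map f ws)" for ws
    using fB by (auto simp: word_over_def)
  have red: "word_over ?B' ws \<Longrightarrow> reduced ws \<Longrightarrow> reduced (map f ws)" for ws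
  proof (induction ws)
    case (Cons p ws)
    note IH = Cons.IH and prems = Cons.prems
    show ?case
    proof (cases ws)
      case Nil then show ?thesis by simp
    next
      case (Cons q w)
      have a: "q \<noteq> linv p" "reduced ws" using prems(2) Cons by (simp_all add: reduced_Cons2)
      have "f q \<noteq> linv (f p)"
      proof
        assume "f q = linv (f p)"
        then have "f q = f (linv p)" by (simp add: flinv)
        then have "q = linv p" using finj prems(1) Cons by (simp add: linv_def)
        then show False using a by simp
      qed
      then show ?thesis using IH a prems(1) Cons by (simp add: reduced_Cons2)
    qed
  qed simp
  show ?thesis unfolding free_basis_def
  proof (intro conjI allI impI)
    show "?B' \<subseteq> carrier G" by (rule B'c)
    show "generate G ?B' = carrier G" by (rule gen)
    fix ws assume a: "word_over ?B' ws \<and> reduced ws \<and> ws \<noteq> []"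
    then have "word_eval G (map f ws) \<noteq> \<one>" using fb wo red by (simp add: free_basis_def)
    then show "word_eval G ws \<noteq> \<one>" using ev a by simp
  qed
qed

end

theorem lemma2:
  fixes G :: "('g, 'c) monoid_scheme" and F :: "('f, 'd) monoid_scheme"
    and S :: "'f set" and R :: "'f set" and r :: 'f
  assumes "group G" and "finitely_generated G" and "residually_finite G"
    and "carrier G \<noteq> {\<one>\<^bsub>G\<^esub>}"
    and "group F" and "free_basis F S" and "card S = group_rank G"
    and "R \<lhd> F" and "F Mod R \<cong> G"
    and "R \<noteq> {\<one>\<^bsub>F\<^esub>}"
    and "r \<in> R" and "r \<noteq> \<one>\<^bsub>F\<^esub>"
    and "\<And>s. s \<in> R \<Longrightarrow> s \<noteq> \<one>\<^bsub>F\<^esub> \<Longrightarrow> word_length F S r \<le> word_length F S s"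
  shows "\<exists>F1. subgroup F1 F \<and> finite (rcosets\<^bsub>F\<^esub> F1) \<and> R \<subseteq> F1 \<and>
           (\<exists>B. free_basis (F\<lparr>carrier := F1\<rparr>) B \<and> r \<in> B)"
proof -
  interpret F: group F by fact
  interpret G: group G by fact
  interpret fbF: fb F S by (intro fb.intro fb_axioms.intro assms)
  have Rn: "R \<lhd> F" by fact
  have Rsub: "subgroup R F" using Rn normal_imp_subgroup by blast
  have rc: "r \<in> carrier F" using assms(11) Rsub subgroup.subset by blast
  obtain w where w: "word_over S w" "reduced w" "word_eval F w = r"
    using fbF.exists_reduced[OF rc] by blast
  define n where "n = length w"
  have wne: "w \<noteq> []" using w assms(12) by auto
  have npos: "0 < n" using wne n_def by simp
  have wl: "word_length F S r = n" using fbF.word_length_eq[OF w(1,2)] w(3) n_def by simp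
  define p where "p i = word_eval F (take i w)" for i
  have pc: "p i \<in> carrier F" for i unfolding p_def by (rule fbF.ev_closed[OF word_over_take[OF w(1)]])
  have notR: "p i \<otimes>\<^bsub>F\<^esub> inv\<^bsub>F\<^esub> (p j) \<notin> R" if ij: "i < j" "j < n" for i j
  proof
    assume e: "p i \<otimes>\<^bsub>F\<^esub> inv\<^bsub>F\<^esub> (p j) \<in> R"
    define s where "s = drop i (take j w)"
    have tj: "take j w = take i w @ s" using ij unfolding s_def
      by (metis append_take_drop_id less_imp_le min.absorb1 take_take)
    have sw: "word_over S s" "reduced s"
      unfolding s_def using word_over_drop[OF word_over_take[OF w(1)]] reduced_drop[OF reduced_take[OF w(2)]]
      by auto
    have sl: "length s = j - i" using ij n_def s_def by simp
    have sc: "word_eval F s \<in> carrier F" using sw fbF.ev_closed by simp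
    have pj: "p j = p i \<otimes>\<^bsub>F\<^esub> word_eval F s"
      unfolding p_def tj using fbF.ev_append[OF word_over_take[OF w(1)] sw(1)] by simp
    have "inv\<^bsub>F\<^esub> (p i) \<otimes>\<^bsub>F\<^esub> (p i \<otimes>\<^bsub>F\<^esub> inv\<^bsub>F\<^esub> (p j)) \<otimes>\<^bsub>F\<^esub> p i \<in> R"
      using normal.inv_op_closed1[OF Rn pc e] .
    also have "inv\<^bsub>F\<^esub> (p i) \<otimes>\<^bsub>F\<^esub> (p i \<otimes>\<^bsub>F\<^esub> inv\<^bsub>F\<^esub> (p j)) \<otimes>\<^bsub>F\<^esub> p i
        = inv\<^bsub>F\<^esub> (word_eval F s)"
      using pj pc sc by (simp add: F.m_assoc F.inv_mult_group F.inv_cancel_left')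
    finally have "inv\<^bsub>F\<^esub> (inv\<^bsub>F\<^esub> (word_eval F s)) \<in> R"
      using subgroup.m_inv_closed[OF Rsub] by blast
    then have sR: "word_eval F s \<in> R" using sc by simp
    have "s \<noteq> []" using sl ij by auto
    then have "word_eval F s \<noteq> \<one>\<^bsub>F\<^esub>" using fbF.nonempty_ne_one sw by blast
    then have "word_length F S r \<le> word_length F S (word_eval F s)" using assms(13) sR by blast
    then show False using wl fbF.word_length_eq[OF sw] sl ij by simp
  qed
  obtain \<phi> where \<phi>: "\<phi> \<in> iso (F Mod R) G" using assms(9) by (auto simp: is_iso_def)
  define h where "h = \<phi> \<circ> (\<lambda>a. R #>\<^bsub>F\<^esub> a)"
  have hhom: "h \<in> hom F G" unfolding h_def
    using hom_compose[OF normal.r_coset_hom_Mod[OF Rn]] \<phi> by (auto simp: iso_def)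
  interpret hF: group_hom F G h by (unfold_locales) (rule hhom)
  interpret FR: group "F Mod R" using normal.factorgroup_is_group[OF Rn] .
  interpret \<phi>: group_hom "F Mod R" G \<phi> by (unfold_locales) (use \<phi> in \<open>simp add: iso_def\<close>)
  have hR: "h g = \<one>\<^bsub>G\<^esub>" if "g \<in> R" for g
  proof -
    have "R #>\<^bsub>F\<^esub> g = R" using subgroup.rcos_const[OF Rsub F.is_group that] .
    then have "h g = \<phi> \<one>\<^bsub>F Mod R\<^esub>" by (simp add: h_def)
    then show ?thesis using \<phi>.hom_one by simp
  qed
  have hker: "g \<in> R" if "g \<in> carrier F" "h g = \<one>\<^bsub>G\<^esub>" for g
  proof -
    have inj: "inj_on \<phi> (carrier (F Mod R))" using \<phi> by (simp add: iso_def bij_betw_def)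
    have "\<phi> (R #>\<^bsub>F\<^esub> g) = \<phi> \<one>\<^bsub>F Mod R\<^esub>" using that \<phi>.hom_one by (simp add: h_def)
    moreover have "R #>\<^bsub>F\<^esub> g \<in> carrier (F Mod R)" using that by (simp add: carrier_FactGroup)
    moreover have "\<one>\<^bsub>F Mod R\<^esub> \<in> carrier (F Mod R)" by (rule FR.one_closed)
    ultimately have "R #>\<^bsub>F\<^esub> g = \<one>\<^bsub>F Mod R\<^esub>" using inj_onD[OF inj] by blast
    then have "R #>\<^bsub>F\<^esub> g = R" by simp
    then show ?thesis using F.rcos_self[OF that(1) Rsub] by simp
  qed
  define E where "E = (\<lambda>(i, j). p i \<otimes>\<^bsub>F\<^esub> inv\<^bsub>F\<^esub> (p j)) ` {(i, j). i < j \<and> j < n}"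
  have Efin: "finite E"
  proof -
    have "{(i, j). i < j \<and> j < n} \<subseteq> {..<n} \<times> {..<n}" by auto
    then show ?thesis unfolding E_def using finite_subset by (intro finite_imageI) blast
  qed
  have "\<forall>e\<in>E. \<exists>N. N \<lhd> G \<and> finite (carrier (G Mod N)) \<and> h e \<notin> N"
  proof
    fix e assume "e \<in> E"
    then obtain i j where ij: "i < j" "j < n" "e = p i \<otimes>\<^bsub>F\<^esub> inv\<^bsub>F\<^esub> (p j)" unfolding E_def by auto
    have ec: "e \<in> carrier F" using ij pc by simp
    have "h e \<noteq> \<one>\<^bsub>G\<^esub>" using hker[OF ec] notR[OF ij(1,2)] ij(3) by blast
    moreover have "h e \<in> carrier G" using ec by simp
    ultimately show "\<exists>N. N \<lhd> G \<and> finite (carrier (G Mod N)) \<and> h e \<notin> N"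
      using assms(3) by (simp add: residually_finite_def)
  qed
  then obtain Nf where Nf0: "\<forall>e\<in>E. Nf e \<lhd> G \<and> finite (carrier (G Mod Nf e)) \<and> h e \<notin> Nf e"
    using bchoice[of E "\<lambda>e N. N \<lhd> G \<and> finite (carrier (G Mod N)) \<and> h e \<notin> N"] by blast
  have Nf: "\<And>e. e \<in> E \<Longrightarrow> Nf e \<lhd> G \<and> finite (carrier (G Mod Nf e)) \<and> h e \<notin> Nf e"
    using Nf0 by blast
  have NfS: "subgroup (Nf e) G" if "e \<in> E" for e using Nf[OF that] normal_imp_subgroup by blast
  define F1 where "F1 = {g \<in> carrier F. \<forall>e\<in>E. h g \<in> Nf e}"
  have F1sub: "subgroup F1 F"
  proof (rule F.subgroupI)
    show "F1 \<subseteq> carrier F" by (auto simp: F1_def)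
    have "\<one>\<^bsub>F\<^esub> \<in> F1" by (auto simp: F1_def intro: subgroup.one_closed[OF NfS])
    then show "F1 \<noteq> {}" by blast
    show "inv\<^bsub>F\<^esub> a \<in> F1" if "a \<in> F1" for a
      using that by (auto simp: F1_def intro!: subgroup.m_inv_closed[OF NfS])
    show "a \<otimes>\<^bsub>F\<^esub> b \<in> F1" if "a \<in> F1" "b \<in> F1" for a b
      using that by (auto simp: F1_def intro!: subgroup.m_closed[OF NfS])
  qed
  have RF1: "R \<subseteq> F1"
  proof
    fix g assume g: "g \<in> R"
    then have "g \<in> carrier F" using Rsub subgroup.subset by blast
    then show "g \<in> F1" using hR[OF g] by (auto simp: F1_def intro: subgroup.one_closed[OF NfS])
  qed
  have F1fin: "finite (rcosets\<^bsub>F\<^esub> F1)"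
  proof -
    have rc_eq: "rcosets\<^bsub>F\<^esub> F1 = (\<lambda>g. F1 #>\<^bsub>F\<^esub> g) ` carrier F" by (auto simp: RCOSETS_def)
    define q where "q g = (\<lambda>e\<in>E. Nf e #>\<^bsub>G\<^esub> h g)" for g
    have "q ` carrier F \<subseteq> PiE E (\<lambda>e. carrier (G Mod Nf e))"
      by (auto simp: q_def carrier_FactGroup)
    moreover have "finite (PiE E (\<lambda>e. carrier (G Mod Nf e)))"
      using Efin Nf by (intro finite_PiE) auto
    ultimately have fq: "finite (q ` carrier F)" using finite_subset by blast
    have "finite ((\<lambda>g. F1 #>\<^bsub>F\<^esub> g) ` carrier F)"
    proof (rule finite_image_factor[OF fq])
      fix a a' assume a: "a \<in> carrier F" "a' \<in> carrier F" "q a = q a'"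
      have "\<forall>e\<in>E. h (a \<otimes>\<^bsub>F\<^esub> inv\<^bsub>F\<^esub> a') \<in> Nf e"
      proof
        fix e assume e: "e \<in> E"
        have "Nf e #>\<^bsub>G\<^esub> h a = Nf e #>\<^bsub>G\<^esub> h a'"
          using fun_cong[OF a(3), of e] e by (simp add: q_def)
        then have "h a \<otimes>\<^bsub>G\<^esub> inv\<^bsub>G\<^esub> h a' \<in> Nf e"
          using G.coset_eq_iff[OF NfS[OF e]] a by simp
        then show "h (a \<otimes>\<^bsub>F\<^esub> inv\<^bsub>F\<^esub> a') \<in> Nf e" using a by simp
      qed
      then have "a \<otimes>\<^bsub>F\<^esub> inv\<^bsub>F\<^esub> a' \<in> F1" using a by (simp add: F1_def)
      then show "F1 #>\<^bsub>F\<^esub> a = F1 #>\<^bsub>F\<^esub> a'" using F.coset_eq_iff[OF F1sub] a by simp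
    qed
    then show ?thesis using rc_eq by simp
  qed
  have dist: "F1 #>\<^bsub>F\<^esub> p i \<noteq> F1 #>\<^bsub>F\<^esub> p j" if ij: "i < j" "j < n" for i j
  proof
    assume "F1 #>\<^bsub>F\<^esub> p i = F1 #>\<^bsub>F\<^esub> p j"
    then have m: "p i \<otimes>\<^bsub>F\<^esub> inv\<^bsub>F\<^esub> (p j) \<in> F1" using F.coset_eq_iff[OF F1sub] pc by simp
    have "p i \<otimes>\<^bsub>F\<^esub> inv\<^bsub>F\<^esub> (p j) \<in> E" using ij unfolding E_def
      by (intro image_eqI[where x="(i, j)"]) auto
    then show False using m Nf by (auto simp: F1_def)
  qed
  define P where "P = (\<lambda>i. take i w) ` {..<n}"
  have psys: "fbF.psys F1 P"
    unfolding fbF.psys_def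
  proof (intro conjI)
    show "\<forall>t\<in>P. word_over S t \<and> reduced t"
      using word_over_take[OF w(1)] reduced_take[OF w(2)] by (auto simp: P_def)
    show "\<forall>u v. u @ v \<in> P \<longrightarrow> u \<in> P"
    proof (intro allI impI)
      fix u v assume "u @ v \<in> P"
      then obtain i where i: "i < n" "u @ v = take i w" by (auto simp: P_def)
      have u1: "u = take (length u) (take i w)" using i(2) by (metis append_eq_conv_conj)
      have "length (u @ v) = length (take i w)" using i(2) by simp
      then have u2: "length u \<le> i" by simp
      then have "u = take (length u) w" using u1 by (simp add: min_def)
      then show "u \<in> P" using i u2 unfolding P_def by (intro image_eqI[where x="length u"]) auto
    qed
    show "\<forall>t\<in>P. \<forall>t'\<in>P. F1 #>\<^bsub>F\<^esub> word_eval F t = F1 #>\<^bsub>F\<^esub> word_eval F t' \<longrightarrow> t = t'"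
    proof (intro ballI impI)
      fix t t' assume tt: "t \<in> P" "t' \<in> P" "F1 #>\<^bsub>F\<^esub> word_eval F t = F1 #>\<^bsub>F\<^esub> word_eval F t'"
      obtain i j where ij: "i < n" "j < n" "t = take i w" "t' = take j w" using tt(1,2) by (auto simp: P_def)
      have "F1 #>\<^bsub>F\<^esub> p i = F1 #>\<^bsub>F\<^esub> p j" using tt(3) ij p_def by simp
      then have "i = j" using dist ij by (metis linorder_neqE_nat)
      then show "t = t'" using ij by simp
    qed
    show "[] \<in> P" using npos unfolding P_def by (intro image_eqI[where x=0]) auto
  qed
  obtain T where T: "P \<subseteq> T" "schreier F S F1 T" using fbF.extend_sys[OF F1sub F1fin psys] by blast
  interpret Sch: schreier F S F1 T by (rule T(2))
  have bl: "butlast w \<in> T" using T(1) npos unfolding P_def by (auto simp: butlast_conv_take n_def)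
  have rF1: "r \<in> F1" using RF1 assms(11) by blast
  have or: "r \<in> Sch.B \<or> inv\<^bsub>F\<^esub> r \<in> Sch.B" using Sch.last_letter_B[OF wne w(1) w(2) bl] w(3) rF1 by simp
  have fbB: "free_basis (F\<lparr>carrier := F1\<rparr>) Sch.B" by (rule Sch.B_free_basis)
  have "\<exists>B. free_basis (F\<lparr>carrier := F1\<rparr>) B \<and> r \<in> B"
  proof (cases "r \<in> Sch.B")
    case True then show ?thesis using fbB by blast
  next
    case False
    then have ir: "inv\<^bsub>F\<^esub> r \<in> Sch.B" using or by simp
    have K: "group (F\<lparr>carrier := F1\<rparr>)" using F.subgroup_imp_group[OF F1sub] .
    have irF1: "inv\<^bsub>F\<^esub> r \<in> F1" using subgroup.m_inv_closed[OF F1sub rF1] .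
    have "inv\<^bsub>F\<lparr>carrier := F1\<rparr>\<^esub> (inv\<^bsub>F\<^esub> r) = r"
      using F.m_inv_consistent[OF F1sub irF1] rc by simp
    then have "free_basis (F\<lparr>carrier := F1\<rparr>) (insert r (Sch.B - {inv\<^bsub>F\<^esub> r}))"
      using group.free_basis_swap[OF K fbB ir] by simp
    then show ?thesis by blast
  qed
  then show ?thesis using F1sub F1fin RF1 by blast
qed

end
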